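(* Let $K$ be a field of characteristic $p>0$ with $\dim_{K^p}K<\infty$, and let $(W_n)_{n\ge0}$ be a power tower on $K$. Then all degrees $[W_{n-1}:W_n]$ are finite and $$[K:W_1]\ \ge\ [W_1:W_2]\ \ge\ [W_2:W_3]\ \ge\ \cdots\ \ge\ 1 .$$
   Context: For a field $K$ of characteristic $p>0$ and $n\ge0$, $K^{p^n}=\{x^{p^n}:x\in K\}$. For subfields $A,B\subset K$, $A\cdot B$ denotes their composite. A power tower on $K$ is a sequence of subfields $W_0,W_1,W_2,\ldots$ of $K$ such that $W_j=W_i\cdot K^{p^j}$ for all $0\le j\le i$ (in particular $W_0=K$ and $K^{p^n}\subset W_n\subset W_{n-1}$). *)

theory Defs
  imports "HOL-Algebra.Embedded_Algebras" "HOL-Algebra.Generated_Fields"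
    "HOL-Computational_Algebra.Primes"
begin

definition pow_subfield :: "('a, 'b) ring_scheme \<Rightarrow> nat \<Rightarrow> nat \<Rightarrow> 'a set" where
  "pow_subfield R p n = (\<lambda>x. x [^]\<^bsub>R\<^esub> (p ^ n)) ` carrier R"

definition composite :: "('a, 'b) ring_scheme \<Rightarrow> 'a set \<Rightarrow> 'a set \<Rightarrow> 'a set" where
  "composite R A B = generate_field R (A \<union> B)"

definition power_tower :: "('a, 'b) ring_scheme \<Rightarrow> nat \<Rightarrow> (nat \<Rightarrow> 'a set) \<Rightarrow> bool" where
  "power_tower R p W \<longleftrightarrow>
     (\<forall>i. subfield (W i) R) \<and>
     (\<forall>i j. j \<le> i \<longrightarrow> W j = composite R (W i) (pow_subfield R p j))"

end

theory Submission imports Defs "HOL-Algebra.Finite_Extensions" begin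

hide_const (open) Divisibility.prime

lemma (in cring) binom_expand:
  assumes a: "a \<in> carrier R" and b: "b \<in> carrier R"
  shows "(a \<oplus> b) [^] n = (\<Oplus>k\<in>{..n}. add_pow R (n choose k) (a [^] k \<otimes> b [^] (n - k)))"
proof (induction n)
  case 0
  then show ?case using a b by simp
next
  case (Suc n)
  define S where "S = (\<Oplus>k\<in>{..n}. add_pow R (n choose k) (a [^] k \<otimes> b [^] (n - k)))"
  have S: "S \<in> carrier R" unfolding S_def using a b by (intro finsum_closed) auto
  define g where "g k = (if k = 0 then \<zero> else add_pow R (n choose (k - 1)) (a [^] k \<otimes> b [^] (Suc n - k)))" for k
  define h where "h k = add_pow R (n choose k) (a [^] k \<otimes> b [^] (Suc n - k))" for k
  have g: "g \<in> {..Suc n} \<rightarrow> carrier R" and h: "h \<in> {..Suc n} \<rightarrow> carrier R"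
    unfolding g_def h_def using a b by auto
  have "a \<otimes> S = (\<Oplus>k\<in>{..n}. a \<otimes> (add_pow R (n choose k) (a [^] k \<otimes> b [^] (n - k))))"
    unfolding S_def using a b by (intro finsum_rdistr) auto
  also have "\<dots> = (\<Oplus>k\<in>{..n}. g (Suc k))"
  proof (intro finsum_cong')
    fix k assume k: "k \<in> {..n}"
    have "a \<otimes> (add_pow R (n choose k) (a [^] k \<otimes> b [^] (n - k))) = add_pow R (n choose k) (a \<otimes> (a [^] k \<otimes> b [^] (n - k)))"
      using a b by (intro add_pow_rdistr) auto
    also have "a \<otimes> (a [^] k \<otimes> b [^] (n - k)) = a [^] Suc k \<otimes> b [^] (Suc n - Suc k)"
      using a b by (simp add: m_assoc[symmetric] m_comm[of a "a [^] k"])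
    finally show "a \<otimes> (add_pow R (n choose k) (a [^] k \<otimes> b [^] (n - k))) = g (Suc k)"
      unfolding g_def by simp
  qed (use a b in \<open>auto simp: g_def\<close>)
  also have "\<dots> = (\<Oplus>k\<in>{..n}. g (Suc k)) \<oplus> g 0"
    using a b by (simp add: g_def g_def finsum_closed)
  also have "\<dots> = (\<Oplus>k\<in>{..Suc n}. g k)"
    using g by (intro finsum_Suc2[symmetric]) auto
  finally have ga: "a \<otimes> S = (\<Oplus>k\<in>{..Suc n}. g k)" .
  have "b \<otimes> S = (\<Oplus>k\<in>{..n}. b \<otimes> (add_pow R (n choose k) (a [^] k \<otimes> b [^] (n - k))))"
    unfolding S_def using a b by (intro finsum_rdistr) auto
  also have "\<dots> = (\<Oplus>k\<in>{..n}. h k)"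
  proof (intro finsum_cong')
    fix k assume k: "k \<in> {..n}"
    have "b \<otimes> (add_pow R (n choose k) (a [^] k \<otimes> b [^] (n - k))) = add_pow R (n choose k) (b \<otimes> (a [^] k \<otimes> b [^] (n - k)))"
      using a b by (intro add_pow_rdistr) auto
    also have "b \<otimes> (a [^] k \<otimes> b [^] (n - k)) = a [^] k \<otimes> b [^] (Suc n - k)"
      using a b k by (simp add: Suc_diff_le m_lcomm[of b] m_comm[of b] m_assoc)
    finally show "b \<otimes> (add_pow R (n choose k) (a [^] k \<otimes> b [^] (n - k))) = h k"
      unfolding h_def by simp
  qed (use a b in \<open>auto simp: h_def\<close>)
  also have "\<dots> = h (Suc n) \<oplus> (\<Oplus>k\<in>{..n}. h k)"
    using a b by (simp add: h_def finsum_closed binomial_eq_0)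
  also have "\<dots> = (\<Oplus>k\<in>{..Suc n}. h k)"
    using h by (intro finsum_Suc[symmetric]) auto
  finally have hb: "b \<otimes> S = (\<Oplus>k\<in>{..Suc n}. h k)" .
  have "(a \<oplus> b) [^] Suc n = (a \<oplus> b) [^] n \<otimes> (a \<oplus> b)"
    by (rule nat_pow_Suc)
  also have "\<dots> = S \<otimes> (a \<oplus> b)"
    by (simp only: Suc.IH S_def)
  also have "\<dots> = a \<otimes> S \<oplus> b \<otimes> S"
    using a b S by (simp add: r_distr m_comm)
  also have "\<dots> = (\<Oplus>k\<in>{..Suc n}. g k \<oplus> h k)"
    unfolding ga hb using g h by (simp add: finsum_addf)
  also have "\<dots> = (\<Oplus>k\<in>{..Suc n}. add_pow R (Suc n choose k) (a [^] k \<otimes> b [^] (Suc n - k)))"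
  proof (intro finsum_cong')
    fix k assume k: "k \<in> {..Suc n}"
    show "g k \<oplus> h k = add_pow R (Suc n choose k) (a [^] k \<otimes> b [^] (Suc n - k))"
    proof (cases k)
      case 0
      then show ?thesis using a b by (simp add: g_def h_def)
    next
      case (Suc j)
      then show ?thesis using a b
        by (simp add: g_def h_def add.nat_pow_mult)
    qed
  qed (use a b in auto)
  finally show ?case .
qed


lemma (in cring) add_pow_char_zero:
  fixes p m :: nat
  assumes "add_pow R p \<one> = \<zero>" "p dvd m" "x \<in> carrier R"
  shows "add_pow R m x = \<zero>"
proof -
  obtain c where c: "m = p * c" using assms(2) by blast
  have px: "add_pow R p x = \<zero>"
    using add_pow_ldistr[of \<one> x p] assms by simp
  have "add_pow R m x = add_pow R c (add_pow R p x)"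
    unfolding c using assms(3) by (simp add: add.nat_pow_pow)
  then show ?thesis using px by simp
qed

lemma (in cring) freshman:
  fixes p :: nat
  assumes p: "prime p" and ch: "add_pow R p \<one> = \<zero>"
    and a: "a \<in> carrier R" and b: "b \<in> carrier R"
  shows "(a \<oplus> b) [^] p = a [^] p \<oplus> b [^] p"
proof -
  obtain r where r: "p = Suc (Suc r)"
  proof -
    have "p \<ge> 2" using prime_ge_2_nat[OF p] .
    then show ?thesis using that by (cases p; cases "p - 1") auto
  qed
  define f where "f k = add_pow R (p choose k) (a [^] k \<otimes> b [^] (p - k))" for k
  have f: "f \<in> A \<rightarrow> carrier R" for A unfolding f_def using a b by auto
  have z: "(\<Oplus>k\<in>{..r}. f (Suc k)) = \<zero>"
  proof -
    have "(\<Oplus>k\<in>{..r}. f (Suc k)) = (\<Oplus>k\<in>{..r}. \<zero>)"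
    proof (intro finsum_cong')
      fix k assume k: "k \<in> {..r}"
      have "p dvd (p choose Suc k)"
        by (rule dvd_choose_prime) (use k r p in auto)
      then show "f (Suc k) = \<zero>" unfolding f_def
        by (rule add_pow_char_zero[OF ch]) (use a b in auto)
    qed auto
    then show ?thesis by simp
  qed
  have "(a \<oplus> b) [^] p = (\<Oplus>k\<in>{..p}. f k)"
    unfolding f_def by (rule binom_expand[OF a b])
  also have "\<dots> = (\<Oplus>k\<in>{..Suc (Suc r)}. f k)"
    by (simp only: r)
  also have "\<dots> = f (Suc (Suc r)) \<oplus> (\<Oplus>k\<in>{..Suc r}. f k)"
    using f by (intro finsum_Suc) 
  also have "(\<Oplus>k\<in>{..Suc r}. f k) = (\<Oplus>k\<in>{..r}. f (Suc k)) \<oplus> f 0"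
    using f by (intro finsum_Suc2)
  finally have "(a \<oplus> b) [^] p = f (Suc (Suc r)) \<oplus> (\<zero> \<oplus> f 0)"
    by (simp only: z)
  moreover have "f (Suc (Suc r)) = a [^] p" "f 0 = b [^] p"
    unfolding f_def using a b r by simp_all
  ultimately show ?thesis using a b by simp
qed


lemma (in ring) subring_pow_closed:
  assumes "subring H R" "x \<in> H"
  shows "x [^] (k::nat) \<in> H"
proof (induction k)
  case 0 then show ?case using subringE(3)[OF assms(1)] by simp
next
  case (Suc k)
  then show ?case using subringE(6)[OF assms(1)] assms(2) by simp
qed

lemma (in ring) dimension_Span_le:
  assumes M: "subfield M R"
  shows "set cs \<subseteq> carrier R \<Longrightarrow> \<exists>n \<le> length cs. dimension n M (Span M cs)"
proof (induction cs)
  case Nil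
  then show ?case by auto
next
  case (Cons u Us)
  then obtain n where n: "n \<le> length Us" "dimension n M (Span M Us)" by auto
  show ?case
  proof (cases "u \<in> Span M Us")
    case True
    hence "Span M (u # Us) = Span M Us"
      using Span_base_incl[OF M] mono_Span_subset[OF M] mono_Span[OF M]
      by (metis Cons.prems insert_subset list.simps(15) subset_antisym)
    then show ?thesis using n by (intro exI[of _ n]) (simp del: Span.simps)
  next
    case False
    have "dimension (Suc n) M (line_extension M u (Span M Us))"
      using Cons.prems False n(2) by (intro Suc_dim) auto
    then show ?thesis using n(1) by auto
  qed
qed

lemma (in cring) preimage_subalgebra:
  assumes M: "subfield M R" and S: "subalgebra M S R" and x: "x \<in> carrier R"
  shows "subalgebra M {y \<in> carrier R. x \<otimes> y \<in> S} R"
proof -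
  have Sc: "S \<subseteq> carrier R" using subalgebra_in_carrier[OF S] .
  have sg: "subgroup S (add_monoid R)" using subalgebra.axioms(1)[OF S] .
  have z: "\<zero> \<in> S" using subgroup.one_closed[OF sg] by simp
  have ad: "a \<oplus> b \<in> S" if "a \<in> S" "b \<in> S" for a b
    using subgroup.m_closed[OF sg] that by simp
  have ng: "\<ominus> a \<in> S" if "a \<in> S" for a
    using subgroup.m_inv_closed[OF sg] that Sc by (simp add: a_inv_def)
  have sm: "k \<otimes> a \<in> S" if "k \<in> M" "a \<in> S" for k a
    using subalgebra.smult_closed[OF S] that by simp
  have Mc: "M \<subseteq> carrier R" using subfieldE(3)[OF M] .
  show ?thesis
    unfolding subalgebra_def subalgebra_axioms_def
  proof (intro conjI allI impI ballI)
    show "subgroup {y \<in> carrier R. x \<otimes> y \<in> S} (add_monoid R)"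
    proof (rule add.subgroupI)
      show "{y \<in> carrier R. x \<otimes> y \<in> S} \<noteq> {}" proof -
        have "\<zero> \<in> {y \<in> carrier R. x \<otimes> y \<in> S}" using z x by simp
        then show ?thesis by blast
      qed
    next
      fix a assume "a \<in> {y \<in> carrier R. x \<otimes> y \<in> S}"
      then show "\<ominus> a \<in> {y \<in> carrier R. x \<otimes> y \<in> S}"
        using ng x by (simp add: r_minus)
    next
      fix a b assume "a \<in> {y \<in> carrier R. x \<otimes> y \<in> S}" "b \<in> {y \<in> carrier R. x \<otimes> y \<in> S}"
      then show "a \<oplus> b \<in> {y \<in> carrier R. x \<otimes> y \<in> S}"
        using ad x by (simp add: r_distr)
    qed auto
  next
    fix k v assume k: "k \<in> M" and v: "v \<in> {y \<in> carrier R. x \<otimes> y \<in> S}"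
    have kc: "k \<in> carrier R" using k Mc by auto
    have "x \<otimes> (k \<otimes> v) = k \<otimes> (x \<otimes> v)" using kc v x by (simp add: m_lcomm)
    then show "k \<otimes> v \<in> {y \<in> carrier R. x \<otimes> y \<in> S}"
      using sm k v kc by auto
  qed
qed


lemma (in field) span_subfield:
  assumes M: "subfield M R" and cs: "set cs \<subseteq> A" and AS: "A \<subseteq> Span M cs"
    and one: "\<one> \<in> A" and mult: "\<And>x y. x \<in> A \<Longrightarrow> y \<in> A \<Longrightarrow> x \<otimes> y \<in> A"
    and Ac: "A \<subseteq> carrier R"
  shows "subfield (Span M cs) R" and "M \<subseteq> Span M cs"
proof -
  let ?S = "Span M cs"
  have csc: "set cs \<subseteq> carrier R" using cs Ac by auto
  have Ssub: "subalgebra M ?S R" using Span_is_subalgebra[OF M csc] .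
  have Sc: "?S \<subseteq> carrier R" using Span_subgroup_props(1)[OF M csc] .
  have incl: "?S \<subseteq> {y \<in> carrier R. x \<otimes> y \<in> ?S}"
    if x: "x \<in> carrier R" and xc: "\<And>c. c \<in> set cs \<Longrightarrow> x \<otimes> c \<in> ?S" for x
    using subalgebra_Span_incl[OF M preimage_subalgebra[OF M Ssub x]] xc csc by auto
  have A1: "a \<otimes> s \<in> ?S" if a: "a \<in> A" and s: "s \<in> ?S" for a s
  proof -
    have "a \<otimes> c \<in> ?S" if "c \<in> set cs" for c using mult[OF a] cs that AS by auto
    then show ?thesis using incl[of a] a Ac s by auto
  qed
  have mS: "s \<otimes> t \<in> ?S" if s: "s \<in> ?S" and t: "t \<in> ?S" for s t
  proof -
    have "s \<otimes> c \<in> ?S" if c: "c \<in> set cs" for c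
    proof -
      have "c \<otimes> s \<in> ?S" using A1 c cs s by auto
      moreover have "c \<otimes> s = s \<otimes> c" using c csc s Sc by (intro m_comm) auto
      ultimately show ?thesis by simp
    qed
    then show ?thesis using incl[of s] s t Sc by auto
  qed
  have oneS: "\<one> \<in> ?S" using one AS by auto
  show MS: "M \<subseteq> ?S"
  proof
    fix m assume m: "m \<in> M"
    have "m \<otimes> \<one> \<in> ?S" using Span_smult_closed[OF M csc m oneS] .
    then show "m \<in> ?S" using m subfieldE(3)[OF M] by auto
  qed
  have subr: "subring ?S R"
    by (rule subringI) (use Sc oneS mS Span_subgroup_props[OF M csc] in auto)
  have fin: "finite_dimension M ?S" using Span_finite_dimension[OF M csc] .
  show "subfield ?S R"
  proof (rule subfieldI'[OF subr])
    fix z assume z: "z \<in> ?S - {\<zero>}"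
    have zc: "z \<in> carrier R" using z Sc by auto
    have alg: "(algebraic over M) z"
      using finite_dimension_imp_algebraic[OF M subr fin] z by auto
    have sf: "subfield (simple_extension M z) R"
      using simple_extension_is_subfield[OF M zc] alg by simp
    have zin: "z \<in> simple_extension M z"
      using simple_extension_mem[OF subfieldE(1)[OF M] zc] .
    have iz: "inv z \<in> simple_extension M z"
      using subfield_m_inv(1)[OF sf, of z] zin z by auto
    have "simple_extension M z \<subseteq> ?S"
      using simple_extension_minimal[OF subfieldE(1)[OF M] zc] subr MS z by blast
    then show "inv z \<in> ?S" using iz by auto
  qed
qed




lemma (in field) frob_hom:
  fixes p :: nat
  assumes p: "prime p" and ch: "add_pow R p \<one> = \<zero>"
  shows "(\<lambda>x. x [^] p) \<in> ring_hom R R"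
proof (rule ring_hom_memI)
  fix x y assume "x \<in> carrier R" "y \<in> carrier R"
  then show "(x \<otimes> y) [^] p = x [^] p \<otimes> y [^] p" by (simp add: nat_pow_distrib)
  show "(x \<oplus> y) [^] p = x [^] p \<oplus> y [^] p" using freshman[OF p ch] \<open>x \<in> carrier R\<close> \<open>y \<in> carrier R\<close> .
qed auto

lemma (in field) main_aux:
  fixes p :: nat and W :: "nat \<Rightarrow> 'a set"
  assumes p: "prime p"
    and ch: "add_pow R p \<one> = \<zero>"
    and fd: "finite_dimension (pow_subfield R p 1) (carrier R)"
    and pt: "power_tower R p W"
  shows "(\<forall>n. finite_dimension (W (Suc n)) (W n))
       \<and> (\<forall>n. dim (W (Suc (Suc n))) (W (Suc n)) \<le> dim (W (Suc n)) (W n))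
       \<and> (\<forall>n. 1 \<le> dim (W (Suc n)) (W n))"
proof -
  define F where "F = (\<lambda>x. x [^] p)"
  have hom: "F \<in> ring_hom R R" unfolding F_def using frob_hom[OF p ch] .
  interpret H: ring_hom_ring R R F using ring_hom_ringI2[OF ring_axioms ring_axioms hom] .
  interpret HC: ring_hom_cring R R F by unfold_locales (rule hom)
  define P where "P n = pow_subfield R p n" for n
  have sub: "subfield (W i) R" for i using pt unfolding power_tower_def by auto
  have comp: "W j = generate_field R (W i \<union> P j)" if "j \<le> i" for i j
    using pt that unfolding power_tower_def composite_def P_def by auto
  have Pc: "P n \<subseteq> carrier R" for n unfolding P_def pow_subfield_def by auto
  have Wc: "W i \<subseteq> carrier R" for i using subfieldE(3)[OF sub] .
  have genincl: "H \<subseteq> generate_field R H" if "H \<subseteq> carrier R" for H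
    using generate_fieldE(2)[OF that refl] .
  have T0: "W 0 = carrier R"
  proof -
    have "P 0 = carrier R" unfolding P_def pow_subfield_def by auto
    moreover have "W 0 \<union> carrier R = carrier R" using Wc by auto
    ultimately have "W 0 = generate_field R (carrier R)" using comp[of 0 0] by simp
    then show ?thesis using generate_field_incl[of "carrier R"] genincl[of "carrier R"] by auto
  qed
  have T1: "P n \<subseteq> W n" for n using comp[of n n] genincl[of "W n \<union> P n"] Wc Pc by auto
  have T2: "W (Suc n) \<subseteq> W n" for n
    using comp[of n "Suc n"] genincl[of "W (Suc n) \<union> P n"] Wc Pc by auto
  have PS: "P (Suc n) = F ` P n" for n
  proof -
    have "y [^] (p ^ Suc n) = (y [^] (p ^ n)) [^] p" if "y \<in> carrier R" for y
      using that by (simp add: nat_pow_pow mult.commute)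
    then show ?thesis unfolding P_def pow_subfield_def F_def image_image by (intro image_cong) auto
  qed
  have T3: "F ` W n \<subseteq> W (Suc n)" for n
  proof -
    let ?S = "{x \<in> carrier R. F x \<in> W (Suc n)}"
    have sW: "subring (W (Suc n)) R" using subfieldE(1)[OF sub] .
    have subr: "subring ?S R"
      by (rule subringI) (use subringE[OF sW] in \<open>auto simp: HC.hom_a_inv\<close>)
    have sf: "subfield ?S R"
    proof (rule subfieldI'[OF subr])
      fix x assume x: "x \<in> ?S - {\<zero>}"
      have xc: "x \<in> carrier R" using x by auto
      have ix: "inv x \<in> carrier R" "inv x \<otimes> x = \<one>"
        using subfield_m_inv[OF carrier_is_subfield, of x] x by auto
      have e: "F (inv x) \<otimes> F x = \<one>" using H.hom_mult[of "inv x" x] ix xc by simp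
      have Fxc: "F x \<in> carrier R" "F (inv x) \<in> carrier R" using xc ix by auto
      have nz: "F x \<noteq> \<zero>" using e Fxc by auto
      have "inv (F x) = F (inv x)"
        using e Fxc by (intro inv_char) (auto simp: m_comm)
      moreover have "inv (F x) \<in> W (Suc n)"
        using subfield_m_inv(1)[OF sub, of "F x"] x nz by auto
      ultimately show "inv x \<in> ?S" using ix by auto
    qed
    have "W (Suc n) \<subseteq> ?S"
      using Wc subring_pow_closed[OF sW] unfolding F_def by auto
    moreover have "P n \<subseteq> ?S"
      using PS[of n] T1[of "Suc n"] Pc by auto
    ultimately have "W n \<subseteq> ?S"
      using comp[of n "Suc n"] generate_field_min_subfield1[OF _ sf, of "W (Suc n) \<union> P n"] Wc Pc
      by auto
    then show ?thesis by auto
  qed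
  have one_nz: "\<one> \<noteq> \<zero>" by simp
  have key: "finite_dimension (W (Suc (Suc n))) (W (Suc n))
           \<and> dim (W (Suc (Suc n))) (W (Suc n)) \<le> dim (W (Suc n)) (W n)"
    if fin: "finite_dimension (W (Suc n)) (W n)" for n
  proof -
    let ?M = "W (Suc (Suc n))"
    obtain bs where bs: "set bs \<subseteq> carrier R" "independent (W (Suc n)) bs"
        "length bs = dim (W (Suc n)) (W n)" "Span (W (Suc n)) bs = W n"
      using exists_base[OF sub finite_dimensionE[OF sub fin]] by (auto simp: over_def)
    define cs where "cs = map F bs"
    have csc: "set cs \<subseteq> carrier R" unfolding cs_def using bs(1) by auto
    have bsW: "set bs \<subseteq> W n" using Span_base_incl[OF sub bs(1)] bs(4) by auto
    have cs: "set cs \<subseteq> F ` W n" unfolding cs_def using bsW by auto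
    have sfF: "subfield (F ` W (Suc n)) R" using H.img_is_subfield(2)[OF sub one_nz] .
    have "F ` W n = Span (F ` W (Suc n)) cs"
      unfolding cs_def using H.Span_hom[OF Wc bs(1)] bs(4) by simp
    also have "\<dots> \<subseteq> Span ?M cs"
    proof
      fix x assume "x \<in> Span (F ` W (Suc n)) cs"
      then obtain Ks where Ks: "set Ks \<subseteq> F ` W (Suc n)" "x = combine Ks cs"
        using Span_eq_combine_set[OF sfF csc] by (auto simp del: Span.simps)
      then have "set Ks \<subseteq> ?M" using T3[of "Suc n"] by auto
      then show "x \<in> Span ?M cs"
        using Span_eq_combine_set[OF sub csc, of "Suc (Suc n)"] Ks(2) by (auto simp del: Span.simps)
    qed
    finally have AS: "F ` W n \<subseteq> Span ?M cs" .
    have one: "\<one> \<in> F ` W n"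
    proof -
      have "F \<one> = \<one>" by simp
      then show ?thesis using subringE(3)[OF subfieldE(1)[OF sub]] by (metis image_eqI)
    qed
    have mult: "x \<otimes> y \<in> F ` W n" if xy: "x \<in> F ` W n" "y \<in> F ` W n" for x y
    proof -
      obtain a b where ab: "a \<in> W n" "b \<in> W n" "x = F a" "y = F b" using xy by auto
      have "a \<in> carrier R" "b \<in> carrier R" using ab Wc by auto
      then have "x \<otimes> y = F (a \<otimes> b)" using ab H.hom_mult by simp
      moreover have "a \<otimes> b \<in> W n" using subringE(6)[OF subfieldE(1)[OF sub]] ab by auto
      ultimately show ?thesis by auto
    qed
    have Ac: "F ` W n \<subseteq> carrier R" using Wc by auto
    have sfS: "subfield (Span ?M cs) R" and MS: "?M \<subseteq> Span ?M cs"
      using span_subfield[OF sub cs AS one mult Ac] by auto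
    have sa: "subalgebra ?M (W (Suc n)) R"
    proof -
      have "subgroup (W (Suc n)) (add_monoid R)"
        using subring.axioms(1)[OF subfieldE(1)[OF sub]] by (simp add: additive_subgroup_def)
      moreover have "k \<otimes> v \<in> W (Suc n)" if "k \<in> ?M" "v \<in> W (Suc n)" for k v
        using subringE(6)[OF subfieldE(1)[OF sub]] T2 that by blast
      ultimately show ?thesis unfolding subalgebra_def subalgebra_axioms_def by auto
    qed
    have le1: "Span ?M cs \<subseteq> W (Suc n)"
      using subalgebra_Span_incl[OF sub sa] cs T3[of n] by auto
    have le2: "W (Suc n) \<subseteq> Span ?M cs"
    proof -
      have "P (Suc n) \<subseteq> Span ?M cs" using PS[of n] T1[of n] AS by auto
      then show ?thesis
        using comp[of "Suc n" "Suc (Suc n)"] generate_field_min_subfield1[OF _ sfS, of "?M \<union> P (Suc n)"]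
          Wc Pc MS by auto
    qed
    have eq: "W (Suc n) = Span ?M cs" using le1 le2 by auto
    obtain m where m: "m \<le> length cs" "dimension m ?M (Span ?M cs)"
      using dimension_Span_le[OF sub csc] by auto
    have "dim ?M (W (Suc n)) = m" using dimI[OF sub m(2)] eq by (simp add: over_def)
    then show ?thesis using m eq bs(3) finite_dimensionI[OF m(2)] unfolding cs_def by auto
  qed
  have base: "finite_dimension (W 1) (W 0)"
  proof -
    have P1: "P 1 = F ` carrier R" unfolding P_def pow_subfield_def F_def by simp
    have sP: "subfield (P 1) R" unfolding P1 using H.img_is_subfield(2)[OF carrier_is_subfield one_nz] .
    obtain bs where bs: "set bs \<subseteq> carrier R" "Span (P 1) bs = carrier R"
      using exists_base[OF sP finite_dimensionE[OF sP fd[folded P_def]]] by auto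
    have "carrier R \<subseteq> Span (W 1) bs"
    proof
      fix x assume x: "x \<in> carrier R"
      have "x \<in> {combine Ks bs |Ks. set Ks \<subseteq> P 1}"
        using Span_eq_combine_set[OF sP bs(1)] bs(2) x by (simp del: Span.simps)
      then obtain Ks where Ks: "set Ks \<subseteq> P 1" "x = combine Ks bs" by blast
      then have "set Ks \<subseteq> W 1" using T1[of 1] by auto
      then show "x \<in> Span (W 1) bs"
        using Span_eq_combine_set[OF sub bs(1), of 1] Ks(2) by (auto simp del: Span.simps)
    qed
    then have "Span (W 1) bs = carrier R" using Span_subgroup_props(1)[OF sub bs(1)] by auto
    then show ?thesis using Span_finite_dimension[OF sub bs(1), of 1] T0 by (simp del: Span.simps)
  qed
  have allfin: "finite_dimension (W (Suc n)) (W n)" for n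
  proof (induction n)
    case 0 then show ?case using base by simp
  next
    case (Suc n) then show ?case using key by blast
  qed
  have ge1: "1 \<le> dim (W (Suc n)) (W n)" for n
  proof (rule ccontr)
    assume "\<not> 1 \<le> dim (W (Suc n)) (W n)"
    then have "dim (W (Suc n)) (W n) = 0" by simp
    then have "dimension 0 (W (Suc n)) (W n)"
      using finite_dimensionE[OF sub allfin[of n]] by (simp add: over_def)
    then have "W n = {\<zero>}" using dimension_zero[OF sub] by auto
    moreover have "\<one> \<in> W n" using subringE(3)[OF subfieldE(1)[OF sub]] .
    ultimately show False by simp
  qed
  show ?thesis using allfin key ge1 by blast
qed

theorem mainTheorem2:
  fixes R :: "('a, 'b) ring_scheme" and p :: nat and W :: "nat \<Rightarrow> 'a set"
  assumes "field R"
    and "prime p"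
    and "add_pow R p \<one>\<^bsub>R\<^esub> = \<zero>\<^bsub>R\<^esub>"
    and "ring.finite_dimension R (pow_subfield R p 1) (carrier R)"
    and "power_tower R p W"
  shows "(\<forall>n. ring.finite_dimension R (W (Suc n)) (W n))
       \<and> (\<forall>n. ring.dim R (W (Suc (Suc n))) (W (Suc n)) \<le> ring.dim R (W (Suc n)) (W n))
       \<and> (\<forall>n. 1 \<le> ring.dim R (W (Suc n)) (W n))"
  using field.main_aux[OF assms] .

end
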